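(* Let $\mathcal P_{XY}$ be any distribution on $\mathbb R^p\times\mathbb R$ and let $Z_i=(X_i,Y_i)$, $i=1,\dots,n+1$, be i.i.d. draws from $\mathcal P_{XY}$. Let $\mathcal Z=\{Z_1,\dots,Z_{n+1}\}$ and $\mathcal X=\{X_1,\dots,X_{n+1}\}$ denote the unordered sets of observations and of features. Let $V(z)=V(z;\mathcal Z)$ be a real-valued score function whose form may depend on the data only through $\mathcal Z$, and set $V_i=V(Z_i;\mathcal Z)$. Let $H:\mathbb R^p\times\mathbb R^p\to[0,1]$ be a localizer function whose form may depend on the data only through $\mathcal X$, with $H(x,x)=1$ for all $x$. Put $H_{ij}=H(X_i,X_j)$ and $p^H_{ij}=H_{ij}/\sum_{k=1}^{n+1}H_{ik}$, and define the weighted distributions $$\hat{\mathcal F}_i=\sum_{j=1}^{n+1}p^H_{ij}\delta_{V_j}\quad(i=1,\dots,n+1),\qquad \hat{\mathcal F}=\sum_{j=1}^{n}p^H_{n+1,j}\delta_{V_j}+p^H_{n+1,n+1}\delta_{+\infty}.$$ Let $\Gamma=\{\sum_{k\in I}p^H_{ik}: i\in\{1,\dots,n+1\},\ I\subseteq\{1,\dots,n+1\}\}$ and fix $\alpha\in(0,1)$. Let $\tilde\alpha$ be the smallest value in $\Gamma$ such that $$\frac{1}{n+1}\sum_{i=1}^{n+1}\mathbb 1\{V_i\le Q(\tilde\alpha;\hat{\mathcal F}_i)\}\ge\alpha.$$ Then $\mathbb P\{V_{n+1}\le Q(\tilde\alpha;\hat{\mathcal F}_{n+1})\}\ge\alpha$,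 and equivalently $\mathbb P\{V_{n+1}\le Q(\tilde\alpha;\hat{\mathcal F})\}\ge\alpha$.
   Context: For a distribution $\mathcal F$ on $\mathbb R\cup\{+\infty\}$, $Q(\alpha;\mathcal F)=\inf\{t:\mathbb P_{T\sim\mathcal F}(T\le t)\ge\alpha\}$ is its level-$\alpha$ quantile. $\delta_v$ is the point mass at $v$. All scores $V_i$ (and hence $\hat{\mathcal F}_i,\hat{\mathcal F},\tilde\alpha$) may depend on $Y_{n+1}$ through $\mathcal Z$. *)

theory Defs
  imports "HOL-Probability.Probability" "HOL-Library.Multiset"
begin

text \<open>Data: \<omega> i = Z_i = (X_i, Y_i) for i in {1..n+1}; the sample space is the
  (n+1)-fold product of the data distribution.\<close>

type_synonym 'p obs = "(real^'p) \<times> real"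

definition Zms :: "nat \<Rightarrow> (nat \<Rightarrow> 'p obs) \<Rightarrow> 'p obs multiset" where
  "Zms n \<omega> = image_mset \<omega> (mset_set {1..n+1})"

definition Xms :: "nat \<Rightarrow> (nat \<Rightarrow> 'p obs) \<Rightarrow> (real^'p) multiset" where
  "Xms n \<omega> = image_mset (\<lambda>i. fst (\<omega> i)) (mset_set {1..n+1})"

definition Vsc :: "('p obs multiset \<Rightarrow> 'p obs \<Rightarrow> real) \<Rightarrow> nat \<Rightarrow> (nat \<Rightarrow> 'p obs) \<Rightarrow> nat \<Rightarrow> real" where
  "Vsc V n \<omega> i = V (Zms n \<omega>) (\<omega> i)"

definition Hloc :: "((real^'p) multiset \<Rightarrow> real^'p \<Rightarrow> real^'p \<Rightarrow> real) \<Rightarrow> nat \<Rightarrow> (nat \<Rightarrow> 'p obs)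
    \<Rightarrow> nat \<Rightarrow> nat \<Rightarrow> real" where
  "Hloc H n \<omega> i j = H (Xms n \<omega>) (fst (\<omega> i)) (fst (\<omega> j))"

definition pH :: "((real^'p) multiset \<Rightarrow> real^'p \<Rightarrow> real^'p \<Rightarrow> real) \<Rightarrow> nat \<Rightarrow> (nat \<Rightarrow> 'p obs)
    \<Rightarrow> nat \<Rightarrow> nat \<Rightarrow> real" where
  "pH H n \<omega> i j = Hloc H n \<omega> i j / (\<Sum>k\<in>{1..n+1}. Hloc H n \<omega> i k)"

text \<open>Level-a quantile Q(a; F) = inf{t : P_{T~F}(T \<le> t) \<ge> a} of the discrete distribution
  F = sum_{j in I} w_j \<delta>_{v_j} on R \<union> {+\<infinity>} (t ranges over the extended reals).\<close>
definition wquantile :: "real \<Rightarrow> (nat \<Rightarrow> real) \<Rightarrow> (nat \<Rightarrow> ereal) \<Rightarrow> nat set \<Rightarrow> ereal" where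
  "wquantile a w v I = Inf {t. (\<Sum>j\<in>{j\<in>I. v j \<le> t}. w j) \<ge> a}"

definition QFi where
  "QFi V H n \<omega> a i = wquantile a (pH H n \<omega> i) (\<lambda>j. ereal (Vsc V n \<omega> j)) {1..n+1}"

definition QFhat where
  "QFhat V H n \<omega> a = wquantile a (pH H n \<omega> (n+1))
      (\<lambda>j. if j = n+1 then \<infinity> else ereal (Vsc V n \<omega> j)) {1..n+1}"

definition Gam where
  "Gam H n \<omega> = {\<Sum>k\<in>I. pH H n \<omega> i k | i I. i \<in> {1..n+1} \<and> I \<subseteq> {1..n+1}}"

definition alpha_tilde where
  "alpha_tilde V H n \<omega> a = Min {g \<in> Gam H n \<omega>.
      (1 / real (n+1)) * (\<Sum>i\<in>{1..n+1}. if ereal (Vsc V n \<omega> i) \<le> QFi V H n \<omega> g i then 1 else 0) \<ge> a}"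

end

theory Submission
  imports Defs
begin

declare One_nat_def[simp del]

lemma wq_char:
  fixes v :: "nat \<Rightarrow> ereal" and x :: real
  assumes fin: "finite I" and w: "\<And>j. j \<in> I \<Longrightarrow> 0 \<le> w j"
  shows "ereal x \<le> wquantile a w v I \<longleftrightarrow> \<not> (a \<le> sum w {j\<in>I. v j < ereal x})"
proof
  assume le: "ereal x \<le> wquantile a w v I"
  show "\<not> (a \<le> sum w {j\<in>I. v j < ereal x})"
  proof
    assume as: "a \<le> sum w {j\<in>I. v j < ereal x}"
    define J where "J = {j\<in>I. v j < ereal x}"
    define t where "t = Max (insert (-\<infinity>) (v ` J))"
    have finJ: "finite J" using fin by (simp add: J_def)
    have tlt: "t < ereal x" unfolding t_def using finJ by (auto simp: J_def)
    have "J \<subseteq> {j\<in>I. v j \<le> t}" unfolding t_def using finJ by (auto simp: J_def)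
    then have "sum w J \<le> sum w {j\<in>I. v j \<le> t}"
      by (intro sum_mono2) (auto simp: fin w)
    with as have "t \<in> {t. (\<Sum>j\<in>{j\<in>I. v j \<le> t}. w j) \<ge> a}" by (simp add: J_def)
    then have "wquantile a w v I \<le> t" unfolding wquantile_def by (rule Inf_lower)
    with le tlt show False by simp
  qed
next
  assume nle: "\<not> (a \<le> sum w {j\<in>I. v j < ereal x})"
  show "ereal x \<le> wquantile a w v I"
    unfolding wquantile_def
  proof (rule Inf_greatest)
    fix t assume "t \<in> {t. (\<Sum>j\<in>{j\<in>I. v j \<le> t}. w j) \<ge> a}"
    then have ta: "a \<le> (\<Sum>j\<in>{j\<in>I. v j \<le> t}. w j)" by simp
    show "ereal x \<le> t"
    proof (rule ccontr)
      assume "\<not> ereal x \<le> t"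
      then have "t < ereal x" by simp
      then have "{j\<in>I. v j \<le> t} \<subseteq> {j\<in>I. v j < ereal x}" by auto
      then have "(\<Sum>j\<in>{j\<in>I. v j \<le> t}. w j) \<le> sum w {j\<in>I. v j < ereal x}"
        by (intro sum_mono2) (auto simp: fin w)
      with ta nle show False by simp
    qed
  qed
qed

definition cov where
  "cov V H n \<omega> i g \<longleftrightarrow> \<not> (g \<le> sum (pH H n \<omega> i) {j\<in>{1..n+1}. Vsc V n \<omega> j < Vsc V n \<omega> i})"

definition covfrac where
  "covfrac V H n \<omega> g = 1 / real (n+1) * (\<Sum>i\<in>{1..n+1}. if cov V H n \<omega> i g then 1 else 0)"


definition sw :: "nat \<Rightarrow> nat \<Rightarrow> nat \<Rightarrow> nat" where
  "sw n i j = (if j = i then n+1 else if j = n+1 then i else j)"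

definition Tp :: "nat \<Rightarrow> nat \<Rightarrow> (nat \<Rightarrow> 'b) \<Rightarrow> nat \<Rightarrow> 'b" where
  "Tp n i \<omega> = (\<lambda>k\<in>{1..n+1}. \<omega> (sw n i k))"

lemma sw_sw[simp]: "sw n i (sw n i j) = j"
  by (simp add: sw_def)

lemma sw_in: "i \<in> {1..n+1} \<Longrightarrow> j \<in> {1..n+1} \<Longrightarrow> sw n i j \<in> {1..n+1}"
  by (auto simp: sw_def)

lemma sw_last: "sw n i (n+1) = i"
  by (simp add: sw_def)

lemma inj_sw: "inj_on (sw n i) A"
  by (metis inj_onI sw_sw)

lemma sw_image: assumes i: "i \<in> {1..n+1}" shows "sw n i ` {1..n+1} = {1..n+1}"
proof
  show "sw n i ` {1..n+1} \<subseteq> {1..n+1}" using sw_in[OF i] by blast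
  show "{1..n+1} \<subseteq> sw n i ` {1..n+1}"
  proof
    fix x assume x: "x \<in> {1..n+1}"
    have "x = sw n i (sw n i x)" by simp
    then show "x \<in> sw n i ` {1..n+1}" using sw_in[OF i x] by blast
  qed
qed

lemma bij_sw: "i \<in> {1..n+1} \<Longrightarrow> bij_betw (sw n i) {1..n+1} {1..n+1}"
  by (simp add: bij_betw_def inj_sw sw_image)

lemma Tp_app: "j \<in> {1..n+1} \<Longrightarrow> Tp n i \<omega> j = \<omega> (sw n i j)"
  by (simp add: Tp_def)

lemma mset_perm:
  assumes i: "i \<in> {1..n+1}"
  shows "image_mset (\<lambda>k. f (Tp n i \<omega> k)) (mset_set {1..n+1}) = image_mset (\<lambda>k. f (\<omega> k)) (mset_set {1..n+1})"
proof -
  have "image_mset (\<lambda>k. f (Tp n i \<omega> k)) (mset_set {1..n+1})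
      = image_mset ((\<lambda>k. f (\<omega> k)) \<circ> sw n i) (mset_set {1..n+1})"
    by (intro image_mset_cong) (simp add: Tp_app)
  also have "\<dots> = image_mset (\<lambda>k. f (\<omega> k)) (image_mset (sw n i) (mset_set {1..n+1}))"
    by (simp add: multiset.map_comp)
  also have "image_mset (sw n i) (mset_set {1..n+1}) = mset_set {1..n+1}"
    by (simp add: image_mset_mset_set inj_sw sw_image[OF i])
  finally show ?thesis .
qed

lemma Zms_Tp: "i \<in> {1..n+1} \<Longrightarrow> Zms n (Tp n i \<omega>) = Zms n \<omega>"
  unfolding Zms_def using mset_perm[where f="\<lambda>x. x"] by simp

lemma Xms_Tp: "i \<in> {1..n+1} \<Longrightarrow> Xms n (Tp n i \<omega>) = Xms n \<omega>"
  unfolding Xms_def using mset_perm[where f="\<lambda>x. fst x"] by simp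

lemma Vsc_Tp: "i \<in> {1..n+1} \<Longrightarrow> j \<in> {1..n+1} \<Longrightarrow> Vsc V n (Tp n i \<omega>) j = Vsc V n \<omega> (sw n i j)"
  unfolding Vsc_def by (simp add: Zms_Tp Tp_app)

lemma Hloc_Tp: "i \<in> {1..n+1} \<Longrightarrow> j \<in> {1..n+1} \<Longrightarrow> k \<in> {1..n+1} \<Longrightarrow>
    Hloc H n (Tp n i \<omega>) j k = Hloc H n \<omega> (sw n i j) (sw n i k)"
  unfolding Hloc_def by (simp add: Xms_Tp Tp_app)

lemma pH_Tp:
  assumes i: "i \<in> {1..n+1}" and j: "j \<in> {1..n+1}" and k: "k \<in> {1..n+1}"
  shows "pH H n (Tp n i \<omega>) j k = pH H n \<omega> (sw n i j) (sw n i k)"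
proof -
  have "(\<Sum>l\<in>{1..n+1}. Hloc H n (Tp n i \<omega>) j l) = (\<Sum>l\<in>{1..n+1}. Hloc H n \<omega> (sw n i j) (sw n i l))"
    by (intro sum.cong refl) (simp add: Hloc_Tp[OF i j])
  also have "\<dots> = (\<Sum>l\<in>{1..n+1}. Hloc H n \<omega> (sw n i j) l)"
    by (rule sum.reindex_bij_betw[OF bij_sw[OF i]])
  finally show ?thesis unfolding pH_def Hloc_Tp[OF i j k] by simp
qed

lemma cov_Tp:
  assumes i: "i \<in> {1..n+1}" and j: "j \<in> {1..n+1}"
  shows "cov V H n (Tp n i \<omega>) j g \<longleftrightarrow> cov V H n \<omega> (sw n i j) g"
proof -
  have "sum (pH H n (Tp n i \<omega>) j) {k\<in>{1..n+1}. Vsc V n (Tp n i \<omega>) k < Vsc V n (Tp n i \<omega>) j}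
     = (\<Sum>k\<in>{1..n+1}. if Vsc V n (Tp n i \<omega>) k < Vsc V n (Tp n i \<omega>) j then pH H n (Tp n i \<omega>) j k else 0)"
    by (rule sum.inter_filter) simp
  also have "\<dots> = (\<Sum>k\<in>{1..n+1}. (\<lambda>k. if Vsc V n \<omega> k < Vsc V n \<omega> (sw n i j) then pH H n \<omega> (sw n i j) k else 0) (sw n i k))"
    by (intro sum.cong refl) (simp add: Vsc_Tp[OF i j] Vsc_Tp[OF i] pH_Tp[OF i j])
  also have "\<dots> = (\<Sum>k\<in>{1..n+1}. if Vsc V n \<omega> k < Vsc V n \<omega> (sw n i j) then pH H n \<omega> (sw n i j) k else 0)"
    by (rule sum.reindex_bij_betw[OF bij_sw[OF i]])
  also have "\<dots> = sum (pH H n \<omega> (sw n i j)) {k\<in>{1..n+1}. Vsc V n \<omega> k < Vsc V n \<omega> (sw n i j)}"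
    by (rule sum.inter_filter[symmetric]) simp
  finally show ?thesis unfolding cov_def by simp
qed

lemma covfrac_Tp:
  assumes i: "i \<in> {1..n+1}"
  shows "covfrac V H n (Tp n i \<omega>) g = covfrac V H n \<omega> g"
proof -
  have "(\<Sum>j\<in>{1..n+1}. if cov V H n (Tp n i \<omega>) j g then 1 else (0::real))
      = (\<Sum>j\<in>{1..n+1}. (\<lambda>j. if cov V H n \<omega> j g then 1 else 0) (sw n i j))"
    by (intro sum.cong refl) (simp add: cov_Tp[OF i])
  also have "\<dots> = (\<Sum>j\<in>{1..n+1}. if cov V H n \<omega> j g then 1 else 0)"
    by (rule sum.reindex_bij_betw[OF bij_sw[OF i]])
  finally show ?thesis unfolding covfrac_def by simp
qed

lemma Gam_Tp:
  assumes i: "i \<in> {1..n+1}"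
  shows "Gam H n (Tp n i \<omega>) = Gam H n \<omega>"
proof
  show "Gam H n (Tp n i \<omega>) \<subseteq> Gam H n \<omega>"
  proof
    fix x assume "x \<in> Gam H n (Tp n i \<omega>)"
    then obtain j I where x: "x = (\<Sum>k\<in>I. pH H n (Tp n i \<omega>) j k)" and j: "j \<in> {1..n+1}"
      and I: "I \<subseteq> {1..n+1}" unfolding Gam_def by blast
    have "x = (\<Sum>k\<in>I. pH H n \<omega> (sw n i j) (sw n i k))"
      unfolding x using I by (intro sum.cong refl) (auto simp: pH_Tp[OF i j])
    also have "\<dots> = (\<Sum>k\<in>sw n i ` I. pH H n \<omega> (sw n i j) k)"
      by (simp add: sum.reindex inj_sw)
    moreover have "sw n i ` I \<subseteq> {1..n+1}" using sw_in[OF i] I by blast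
    ultimately show "x \<in> Gam H n \<omega>" unfolding Gam_def
      by (intro CollectI exI[of _ "sw n i j"] exI[of _ "sw n i ` I"]) (use sw_in[OF i j] in auto)
  qed
next
  show "Gam H n \<omega> \<subseteq> Gam H n (Tp n i \<omega>)"
  proof
    fix x assume "x \<in> Gam H n \<omega>"
    then obtain j I where x: "x = (\<Sum>k\<in>I. pH H n \<omega> j k)" and j: "j \<in> {1..n+1}"
      and I: "I \<subseteq> {1..n+1}" unfolding Gam_def by blast
    have "x = (\<Sum>k\<in>I. pH H n (Tp n i \<omega>) (sw n i j) (sw n i k))"
      unfolding x using I by (intro sum.cong refl) (auto simp: pH_Tp[OF i sw_in[OF i j] sw_in[OF i]])
    also have "\<dots> = (\<Sum>k\<in>sw n i ` I. pH H n (Tp n i \<omega>) (sw n i j) k)"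
      by (simp add: sum.reindex inj_sw)
    moreover have "sw n i ` I \<subseteq> {1..n+1}" using sw_in[OF i] I by blast
    ultimately show "x \<in> Gam H n (Tp n i \<omega>)" unfolding Gam_def
      by (intro CollectI exI[of _ "sw n i j"] exI[of _ "sw n i ` I"]) (use sw_in[OF i j] in auto)
  qed
qed

context
  fixes H :: "(real^'p) multiset \<Rightarrow> real^'p \<Rightarrow> real^'p \<Rightarrow> real"
  assumes Hnn: "\<And>Xs x y. 0 \<le> H Xs x y" and Hd: "\<And>Xs x. H Xs x x = 1"
begin

declare One_nat_def[simp del]

lemma denom_pos:
  assumes i: "i \<in> {1..n+1}"
  shows "0 < (\<Sum>k\<in>{1..n+1}. Hloc H n \<omega> i k)"
proof -
  have "Hloc H n \<omega> i i \<le> (\<Sum>k\<in>{1..n+1}. Hloc H n \<omega> i k)"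
    by (rule member_le_sum) (use i in \<open>auto simp: Hloc_def Hnn\<close>)
  moreover have "Hloc H n \<omega> i i = 1" by (simp add: Hloc_def Hd)
  ultimately show ?thesis by simp
qed

lemma pH_nonneg:
  assumes i: "i \<in> {1..n+1}"
  shows "0 \<le> pH H n \<omega> i j"
  using denom_pos[OF i, where \<omega>=\<omega>] unfolding pH_def
  by (intro divide_nonneg_pos) (auto simp: Hloc_def Hnn)

lemma pH_sum:
  assumes i: "i \<in> {1..n+1}"
  shows "(\<Sum>k\<in>{1..n+1}. pH H n \<omega> i k) = 1"
  using denom_pos[OF i, where \<omega>=\<omega>] unfolding pH_def
  by (simp add: sum_divide_distrib[symmetric])

lemma pH_diag_pos:
  assumes i: "i \<in> {1..n+1}"
  shows "0 < pH H n \<omega> i i"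
  using denom_pos[OF i, where \<omega>=\<omega>] unfolding pH_def
  by (simp add: Hloc_def Hd)

lemma QFi_cov:
  assumes i: "i \<in> {1..n+1}"
  shows "ereal (Vsc V n \<omega> i) \<le> QFi V H n \<omega> g i \<longleftrightarrow> cov V H n \<omega> i g"
  unfolding QFi_def cov_def
  using i by (subst wq_char) (auto intro: pH_nonneg)

lemma QFhat_cov:
  shows "ereal (Vsc V n \<omega> (n+1)) \<le> QFhat V H n \<omega> g \<longleftrightarrow> cov V H n \<omega> (n+1) g"
proof -
  have e: "{j\<in>{1..n+1}. (if j = n+1 then \<infinity> else ereal (Vsc V n \<omega> j)) < ereal (Vsc V n \<omega> (n+1))}
     = {j\<in>{1..n+1}. Vsc V n \<omega> j < Vsc V n \<omega> (n+1)}" by auto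
  have "ereal (Vsc V n \<omega> (n+1)) \<le> QFhat V H n \<omega> g \<longleftrightarrow> \<not> (g \<le> sum (pH H n \<omega> (n+1)) {j\<in>{1..n+1}. (if j = n+1 then \<infinity> else ereal (Vsc V n \<omega> j)) < ereal (Vsc V n \<omega> (n+1))})"
    unfolding QFhat_def by (rule wq_char) (auto intro: pH_nonneg)
  then show ?thesis unfolding cov_def e .
qed

lemma alpha_tilde_alt:
  shows "alpha_tilde V H n \<omega> a = Min {g\<in>Gam H n \<omega>. a \<le> covfrac V H n \<omega> g}"
proof -
  have "(\<Sum>i\<in>{1..n+1}. if ereal (Vsc V n \<omega> i) \<le> QFi V H n \<omega> g i then 1 else 0)
      = (\<Sum>i\<in>{1..n+1}. if cov V H n \<omega> i g then (1::real) else 0)" for g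
    by (intro sum.cong refl) (simp add: QFi_cov)
  then show ?thesis unfolding alpha_tilde_def covfrac_def by simp
qed

lemma Gam_finite: "finite (Gam H n \<omega>)"
proof -
  have "Gam H n \<omega> = (\<lambda>(i,I). \<Sum>k\<in>I. pH H n \<omega> i k) ` ({1..n+1} \<times> Pow {1..n+1})"
    unfolding Gam_def by force
  then show ?thesis by simp
qed

lemma one_in_Gam: "(\<Sum>k\<in>{1..n+1}. pH H n \<omega> 1 k) \<in> Gam H n \<omega>"
  unfolding Gam_def by (intro CollectI exI[of _ 1] exI[of _ "{1..n+1}"]) auto

lemma cov_one:
  assumes i: "i \<in> {1..n+1}"
  shows "cov V H n \<omega> i 1"
proof -
  have "sum (pH H n \<omega> i) {j\<in>{1..n+1}. Vsc V n \<omega> j < Vsc V n \<omega> i}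
      \<le> sum (pH H n \<omega> i) ({1..n+1} - {i})"
    by (intro sum_mono2) (auto intro: pH_nonneg[OF i])
  also have "\<dots> = 1 - pH H n \<omega> i i"
    using pH_sum[OF i, where \<omega>=\<omega>] i by (simp add: sum_diff1)
  also have "\<dots> < 1" using pH_diag_pos[OF i] by simp
  finally show ?thesis unfolding cov_def by simp
qed

lemma covfrac_one:
  shows "covfrac V H n \<omega> 1 = 1"
  unfolding covfrac_def using cov_one by simp

lemma alpha_tilde_mem:
  assumes a: "a \<le> 1"
  shows "alpha_tilde V H n \<omega> a \<in> {g\<in>Gam H n \<omega>. a \<le> covfrac V H n \<omega> g}"
proof -
  have "1 \<in> {g\<in>Gam H n \<omega>. a \<le> covfrac V H n \<omega> g}"
    using one_in_Gam[of n \<omega>] pH_sum[ of 1 n \<omega>] covfrac_one a by simp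
  then show ?thesis unfolding alpha_tilde_alt
    by (intro Min_in) (auto simp: Gam_finite)
qed

lemma alpha_tilde_Tp:
  assumes i: "i \<in> {1..n+1}"
  shows "alpha_tilde V H n (Tp n i \<omega>) a = alpha_tilde V H n \<omega> a"
  unfolding alpha_tilde_alt Gam_Tp[OF i] covfrac_Tp[OF i] ..


lemma event_char:
  assumes a: "a \<le> 1"
  shows "cov V H n \<omega> j (alpha_tilde V H n \<omega> a) \<longleftrightarrow>
    (\<exists>p\<in>{1..n+1} \<times> Pow {1..n+1}.
       a \<le> covfrac V H n \<omega> (sum (pH H n \<omega> (fst p)) (snd p)) \<and>
       (\<forall>q\<in>{1..n+1} \<times> Pow {1..n+1}. a \<le> covfrac V H n \<omega> (sum (pH H n \<omega> (fst q)) (snd q)) \<longrightarrow>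
           sum (pH H n \<omega> (fst p)) (snd p) \<le> sum (pH H n \<omega> (fst q)) (snd q)) \<and>
       cov V H n \<omega> j (sum (pH H n \<omega> (fst p)) (snd p)))"
  (is "?L \<longleftrightarrow> (\<exists>p\<in>?K. ?good p \<and> (\<forall>q\<in>?K. ?good q \<longrightarrow> ?S p \<le> ?S q) \<and> ?C p)")
proof -
  define G where "G = {g\<in>Gam H n \<omega>. a \<le> covfrac V H n \<omega> g}"
  have GamS: "Gam H n \<omega> = ?S ` ?K" unfolding Gam_def by force
  have finG: "finite G" unfolding G_def using Gam_finite by simp
  have at: "alpha_tilde V H n \<omega> a = Min G" unfolding G_def by (rule alpha_tilde_alt)
  have mem: "Min G \<in> G" using alpha_tilde_mem[OF a, of V n \<omega>] unfolding at G_def .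
  show ?thesis
  proof
    assume L: ?L
    from mem obtain p where p: "p \<in> ?K" "Min G = ?S p" unfolding G_def GamS by blast
    have "?good p" using mem p unfolding G_def by simp
    moreover have "\<forall>q\<in>?K. ?good q \<longrightarrow> ?S p \<le> ?S q"
    proof (intro ballI impI)
      fix q assume "q \<in> ?K" "?good q"
      then have "?S q \<in> G" unfolding G_def GamS by blast
      then show "?S p \<le> ?S q" using p(2) finG by (metis Min_le)
    qed
    moreover have "?C p" using L at p(2) by simp
    ultimately show "\<exists>p\<in>?K. ?good p \<and> (\<forall>q\<in>?K. ?good q \<longrightarrow> ?S p \<le> ?S q) \<and> ?C p"
      using p(1) by blast
  next
    assume "\<exists>p\<in>?K. ?good p \<and> (\<forall>q\<in>?K. ?good q \<longrightarrow> ?S p \<le> ?S q) \<and> ?C p"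
    then obtain p where p: "p \<in> ?K" "?good p" "\<forall>q\<in>?K. ?good q \<longrightarrow> ?S p \<le> ?S q" "?C p"
      by blast
    have "?S p \<in> G" using p unfolding G_def GamS by blast
    then have le1: "Min G \<le> ?S p" using finG by (rule Min_le[rotated])
    from mem obtain q where q: "q \<in> ?K" "Min G = ?S q" unfolding G_def GamS by blast
    have "?good q" using mem q unfolding G_def by simp
    then have "?S p \<le> ?S q" using p(3) q(1) by blast
    then have "?S p \<le> Min G" using q(2) by simp
    with le1 have "Min G = ?S p" by simp
    then show ?L using at p(4) by simp
  qed
qed

end

theorem theorem1:
  fixes M :: "((real^'p) \<times> real) measure"
    and n :: nat
    and V :: "((real^'p) \<times> real) multiset \<Rightarrow> (real^'p) \<times> real \<Rightarrow> real"
    and H :: "(real^'p) multiset \<Rightarrow> real^'p \<Rightarrow> real^'p \<Rightarrow> real"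
    and \<alpha> :: real
  assumes "prob_space M"
    and "sets M = sets borel"
    and "\<And>Xs x y. 0 \<le> H Xs x y \<and> H Xs x y \<le> 1"
    and "\<And>Xs x. H Xs x x = 1"
    and "\<And>i. i \<in> {1..n+1} \<Longrightarrow>
           (\<lambda>\<omega>. Vsc V n \<omega> i) \<in> borel_measurable (PiM {1..n+1} (\<lambda>_. M))"
    and "\<And>i j. i \<in> {1..n+1} \<Longrightarrow> j \<in> {1..n+1} \<Longrightarrow>
           (\<lambda>\<omega>. Hloc H n \<omega> i j) \<in> borel_measurable (PiM {1..n+1} (\<lambda>_. M))"
    and "0 < \<alpha>" and "\<alpha> < 1"
  shows "measure (PiM {1..n+1} (\<lambda>_. M))
           {\<omega> \<in> space (PiM {1..n+1} (\<lambda>_. M)).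
              ereal (Vsc V n \<omega> (n+1)) \<le> QFi V H n \<omega> (alpha_tilde V H n \<omega> \<alpha>) (n+1)} \<ge> \<alpha>
       \<and> measure (PiM {1..n+1} (\<lambda>_. M))
           {\<omega> \<in> space (PiM {1..n+1} (\<lambda>_. M)).
              ereal (Vsc V n \<omega> (n+1)) \<le> QFhat V H n \<omega> (alpha_tilde V H n \<omega> \<alpha>)} \<ge> \<alpha>"
proof -
  define P where "P = PiM {1..n+1} (\<lambda>_. M)"
  have hnn: "\<And>Xs x y. 0 \<le> H Xs x y" using assms(3) by blast
  have hd: "\<And>Xs x. H Xs x x = 1" using assms(4) by blast
  have a1: "\<alpha> \<le> 1" using assms(8) by simp
  interpret P: prob_space P unfolding P_def by (intro prob_space_PiM assms(1))
  have mV: "\<And>j. j \<in> {1..n+1} \<Longrightarrow> (\<lambda>\<omega>. Vsc V n \<omega> j) \<in> borel_measurable P"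
    using assms(5) P_def by simp
  have mH: "\<And>j k. j \<in> {1..n+1} \<Longrightarrow> k \<in> {1..n+1} \<Longrightarrow> (\<lambda>\<omega>. Hloc H n \<omega> j k) \<in> borel_measurable P"
    using assms(6) P_def by simp
  have mpH: "\<And>j k. j \<in> {1..n+1} \<Longrightarrow> k \<in> {1..n+1} \<Longrightarrow> (\<lambda>\<omega>. pH H n \<omega> j k) \<in> borel_measurable P"
    unfolding pH_def by (intro borel_measurable_divide borel_measurable_sum mH) auto
  have mS: "\<And>j I. j \<in> {1..n+1} \<Longrightarrow> I \<subseteq> {1..n+1} \<Longrightarrow> (\<lambda>\<omega>. sum (pH H n \<omega> j) I) \<in> borel_measurable P"
    by (intro borel_measurable_sum mpH) auto
  have predle: "\<And>f g. f \<in> borel_measurable P \<Longrightarrow> g \<in> borel_measurable P \<Longrightarrow> Measurable.pred P (\<lambda>x. (f x::real) \<le> g x)"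
    unfolding pred_def by (rule borel_measurable_le)
  have mcov: "Measurable.pred P (\<lambda>\<omega>. cov V H n \<omega> j (g \<omega>))" if g: "g \<in> borel_measurable P" and j: "j \<in> {1..n+1}" for g j
  proof -
    define F where "F \<omega> = (\<Sum>k\<in>{1..n+1}. if Vsc V n \<omega> k < Vsc V n \<omega> j then pH H n \<omega> j k else 0)" for \<omega>
    have F: "F \<in> borel_measurable P" unfolding F_def
    proof (intro borel_measurable_sum measurable_If)
      fix k assume k: "k \<in> {1..n+1}"
      show "(\<lambda>\<omega>. pH H n \<omega> j k) \<in> borel_measurable P" using mpH[OF j k] .
      show "(\<lambda>\<omega>. 0::real) \<in> borel_measurable P" by simp
      show "{\<omega> \<in> space P. Vsc V n \<omega> k < Vsc V n \<omega> j} \<in> sets P"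
        by (rule borel_measurable_less[OF mV[OF k] mV[OF j]])
    qed
    have "cov V H n \<omega> j (g \<omega>) \<longleftrightarrow> \<not> (g \<omega> \<le> F \<omega>)" for \<omega>
      unfolding cov_def F_def by (subst sum.inter_filter) simp_all
    moreover have "Measurable.pred P (\<lambda>\<omega>. \<not> (g \<omega> \<le> F \<omega>))"
      by (intro pred_intros_logic(2) predle g F)
    ultimately show ?thesis by simp
  qed
  have mcf: "(\<lambda>\<omega>. covfrac V H n \<omega> (g \<omega>)) \<in> borel_measurable P" if g: "g \<in> borel_measurable P" for g
    unfolding covfrac_def
  proof (intro borel_measurable_times borel_measurable_const borel_measurable_sum measurable_If)
    fix k assume k: "k \<in> {1..n+1}"
    show "{\<omega> \<in> space P. cov V H n \<omega> k (g \<omega>)} \<in> sets P"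
      using mcov[OF g k] unfolding pred_def .
  qed
  define E where "E j = {\<omega> \<in> space P. cov V H n \<omega> j (alpha_tilde V H n \<omega> \<alpha>)}" for j
  have mE: "E j \<in> sets P" if j: "j \<in> {1..n+1}" for j
  proof -
    let ?K = "{1..n+1} \<times> Pow {1..n+1}"
    let ?S = "\<lambda>\<omega> p. sum (pH H n \<omega> (fst p)) (snd p)"
    have "E j = {\<omega> \<in> space P. \<exists>p\<in>?K. \<alpha> \<le> covfrac V H n \<omega> (?S \<omega> p) \<and>
       (\<forall>q\<in>?K. \<alpha> \<le> covfrac V H n \<omega> (?S \<omega> q) \<longrightarrow> ?S \<omega> p \<le> ?S \<omega> q) \<and>
       cov V H n \<omega> j (?S \<omega> p)}"
      unfolding E_def using event_char[where H=H, OF hnn hd a1] by simp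
    also have "\<dots> \<in> sets P" unfolding pred_def[symmetric]
    proof (intro pred_intros_finite(4) pred_intros_logic(3) pred_intros_finite(3) pred_intros_logic(4))
      show "finite ?K" by simp
      show "finite ?K" by simp
      fix p assume p: "p \<in> ?K"
      then have mSp: "(\<lambda>\<omega>. ?S \<omega> p) \<in> borel_measurable P" by (intro mS) auto
      show "Measurable.pred P (\<lambda>\<omega>. \<alpha> \<le> covfrac V H n \<omega> (?S \<omega> p))"
        by (intro predle mcf mSp) simp
      show "Measurable.pred P (\<lambda>\<omega>. cov V H n \<omega> j (?S \<omega> p))" by (rule mcov[OF mSp j])
      fix q assume q: "q \<in> ?K"
      then have mSq: "(\<lambda>\<omega>. ?S \<omega> q) \<in> borel_measurable P" by (intro mS) auto
      show "Measurable.pred P (\<lambda>\<omega>. \<alpha> \<le> covfrac V H n \<omega> (?S \<omega> q))"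
        by (intro predle mcf mSq) simp
      show "Measurable.pred P (\<lambda>\<omega>. ?S \<omega> p \<le> ?S \<omega> q)" by (rule predle[OF mSp mSq])
    qed
    finally show ?thesis .
  qed
  have Tmeas: "Tp n i \<in> measurable P P" if i: "i \<in> {1..n+1}" for i
  proof -
    have "Tp n i = (\<lambda>\<omega>. \<lambda>k\<in>{1..n+1}. \<omega> (sw n i k))" by (rule ext) (simp add: Tp_def)
    also have "\<dots> \<in> measurable P P" unfolding P_def
      by (intro measurable_restrict measurable_component_singleton sw_in[OF i])
    finally show ?thesis .
  qed
  have Tdistr: "distr P P (Tp n i) = P" if i: "i \<in> {1..n+1}" for i
  proof -
    have "distr P P (Tp n i) = distr P P (\<lambda>\<omega>. \<lambda>k\<in>{1..n+1}. \<omega> (sw n i k))"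
      by (rule arg_cong[where f="distr P P"]) (rule ext, simp add: Tp_def)
    also have "\<dots> = P"
      unfolding P_def using distr_PiM_reindex[of "{1..n+1}" "\<lambda>_. M" "sw n i" "{1..n+1}"]
        assms(1) inj_sw sw_in[OF i] by auto
    finally show ?thesis .
  qed
  have Tpre: "Tp n i -` E (n+1) \<inter> space P = E i" if i: "i \<in> {1..n+1}" for i
    unfolding E_def using measurable_space[OF Tmeas[OF i]]
    by (auto simp: alpha_tilde_Tp[where H=H, OF hnn hd i] cov_Tp[OF i] sw_last)
  have meq: "measure P (E i) = measure P (E (n+1))" if i: "i \<in> {1..n+1}" for i
  proof -
    have "measure P (E (n+1)) = measure (distr P P (Tp n i)) (E (n+1))" using Tdistr[OF i] by simp
    also have "\<dots> = measure P (Tp n i -` E (n+1) \<inter> space P)"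
      by (rule measure_distr[OF Tmeas[OF i] mE]) simp
    also have "\<dots> = measure P (E i)" using Tpre[OF i] by simp
    finally show ?thesis by simp
  qed
  have ind: "(\<Sum>j\<in>{1..n+1}. indicator (E j) \<omega>) = real (n+1) * covfrac V H n \<omega> (alpha_tilde V H n \<omega> \<alpha>)"
    if w: "\<omega> \<in> space P" for \<omega>
  proof -
    have "(\<Sum>j\<in>{1..n+1}. indicator (E j) \<omega>) = (\<Sum>j\<in>{1..n+1}. if cov V H n \<omega> j (alpha_tilde V H n \<omega> \<alpha>) then 1 else (0::real))"
      by (intro sum.cong refl) (simp add: E_def w indicator_def)
    then show ?thesis unfolding covfrac_def by simp
  qed
  have "real (n+1) * \<alpha> = (\<integral>\<omega>. real (n+1) * \<alpha> \<partial>P)" by (simp add: P.prob_space)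
  also have "\<dots> \<le> (\<integral>\<omega>. (\<Sum>j\<in>{1..n+1}. indicator (E j) \<omega>) \<partial>P)"
  proof (rule integral_mono)
    show "integrable P (\<lambda>\<omega>. real (n+1) * \<alpha>)" by simp
    show "integrable P (\<lambda>\<omega>. \<Sum>j\<in>{1..n+1}. indicator (E j) \<omega> :: real)"
    proof (rule Bochner_Integration.integrable_sum)
      fix j assume j: "j \<in> {1..n+1}"
      show "integrable P (\<lambda>\<omega>. indicator (E j) \<omega> :: real)"
        unfolding indicator_def[symmetric]
        by (rule integrable_real_indicator[OF mE[OF j]]) (simp add: less_top[symmetric])
    qed
    fix \<omega> assume w: "\<omega> \<in> space P"
    show "real (n+1) * \<alpha> \<le> (\<Sum>j\<in>{1..n+1}. indicator (E j) \<omega>)"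
      unfolding ind[OF w] using alpha_tilde_mem[where H=H, OF hnn hd a1, of V n \<omega>] by simp
  qed
  also have "\<dots> = (\<Sum>j\<in>{1..n+1}. measure P (E j))"
  proof -
    have "(\<integral>\<omega>. (\<Sum>j\<in>{1..n+1}. indicator (E j) \<omega>) \<partial>P) = (\<Sum>j\<in>{1..n+1}. (\<integral>\<omega>. indicator (E j) \<omega> \<partial>P) :: real)"
      by (rule Bochner_Integration.integral_sum) (use mE in \<open>auto simp: less_top[symmetric]\<close>)
    also have "\<dots> = (\<Sum>j\<in>{1..n+1}. measure P (E j))"
    proof (rule sum.cong[OF refl])
      fix j assume j: "j \<in> {1..n+1}"
      have "E j \<inter> space P = E j" using sets.sets_into_space[OF mE[OF j]] by blast
      then show "(\<integral>\<omega>. indicator (E j) \<omega> \<partial>P) = (measure P (E j) :: real)"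
        unfolding indicator_def[symmetric] integral_indicator by simp
    qed
    finally show ?thesis .
  qed
  also have "\<dots> = (\<Sum>j\<in>{1..n+1}. measure P (E (n+1)))"
    by (rule sum.cong[OF refl]) (rule meq)
  also have "\<dots> = real (n+1) * measure P (E (n+1))" by simp
  finally have main: "\<alpha> \<le> measure P (E (n+1))" by simp
  have e1: "{\<omega> \<in> space P. ereal (Vsc V n \<omega> (n+1)) \<le> QFi V H n \<omega> (alpha_tilde V H n \<omega> \<alpha>) (n+1)} = E (n+1)"
    unfolding E_def by (simp add: QFi_cov[where H=H, OF hnn hd])
  have e2: "{\<omega> \<in> space P. ereal (Vsc V n \<omega> (n+1)) \<le> QFhat V H n \<omega> (alpha_tilde V H n \<omega> \<alpha>)} = E (n+1)"
    unfolding E_def by (simp add: QFhat_cov[where H=H, OF hnn hd])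
  show ?thesis using main e1 e2 unfolding P_def by simp
qed

end
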